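(* Let $M$ be a circulant matrix over $\mathbb{Z}_4+u\mathbb{Z}_4$ of order $n-1$, and let $\alpha,\beta,\gamma\in\mathbb{Z}_4+u\mathbb{Z}_4$ with $\gamma=\pm\beta$. Let $G=[I_n\,|\,B]$, where $B$ is the $n\times n$ matrix whose first row is $(\alpha,\beta,\beta,\dots,\beta)$ and whose remaining rows are $(\gamma\,|\,\text{row } i \text{ of } M)$ for $i=1,\dots,n-1$, i.e. $B=\begin{pmatrix}\alpha & \beta\cdots\beta\\ \gamma\mathbf{1}^T & M\end{pmatrix}$ with $\mathbf{1}$ the all-ones vector of length $n-1$. Then $G$ generates a formally self-dual code of length $2n$ over $\mathbb{Z}_4+u\mathbb{Z}_4$ whose Gray image under $\phi$ is a formally self-dual code over $\mathbb{Z}_4$ of length $4n$.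
   Context: $\mathbb{Z}_4+u\mathbb{Z}_4$ is the commutative ring of characteristic $4$ with $u^2=0$. A linear code over a ring $R$ is an $R$-submodule of $R^N$; duals are taken with respect to the Euclidean inner product $\sum_i x_iy_i$ in $R$. Lee weight on $\mathbb{Z}_4$: $0,1,2,1$ for $0,1,2,3$; on $\mathbb{Z}_4+u\mathbb{Z}_4$: $w_L(a+ub)=w_L(b)+w_L(a+b)$; extended additively to vectors. A linear code (over either ring) is formally self-dual if it has the same Lee weight enumerator as its dual. The Gray map $\phi:(\mathbb{Z}_4+u\mathbb{Z}_4)^{N}\to\mathbb{Z}_4^{2N}$ is $\phi(\overline{a}+u\overline{b})=(\overline{b},\overline{a}+\overline{b})$ for $\overline{a},\overline{b}\in\mathbb{Z}_4^N$. A circulant matrix is one in which each row is the cyclic right shift of the previous row. *)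

theory Defs
  imports Main "HOL-Library.Numeral_Type" "HOL-Library.Product_Plus"
begin

text \<open>The ring Z4 + u Z4 (u^2 = 0): the element a + u b is represented by the pair (a, b)
  with a, b :: 4 (the integers mod 4).  Addition, zero, negation and subtraction are the
  componentwise operations on pairs (HOL-Library.Product_Plus); multiplication is
  (a + u b)(c + u d) = ac + u(ad + bc).\<close>

type_synonym zu4 = "4 \<times> 4"

definition zu_one :: zu4 where "zu_one = (1, 0)"

definition zu_mult :: "zu4 \<Rightarrow> zu4 \<Rightarrow> zu4" where
  "zu_mult x y = (fst x * fst y, fst x * snd y + snd x * fst y)"

definition vadd :: "'a::plus list \<Rightarrow> 'a list \<Rightarrow> 'a list" where
  "vadd x y = map2 (+) x y"

definition zu_smult :: "zu4 \<Rightarrow> zu4 list \<Rightarrow> zu4 list" where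
  "zu_smult r x = map (zu_mult r) x"

definition z4_smult :: "4 \<Rightarrow> 4 list \<Rightarrow> 4 list" where
  "z4_smult r x = map ((*) r) x"

definition zu_inner :: "zu4 list \<Rightarrow> zu4 list \<Rightarrow> zu4" where
  "zu_inner x y = sum_list (map2 zu_mult x y)"

definition z4_inner :: "4 list \<Rightarrow> 4 list \<Rightarrow> 4" where
  "z4_inner x y = sum_list (map2 (*) x y)"

definition linear_code_zu :: "nat \<Rightarrow> zu4 list set \<Rightarrow> bool" where
  "linear_code_zu N C \<longleftrightarrow> C \<subseteq> {v. length v = N} \<and> replicate N 0 \<in> C \<and>
     (\<forall>x\<in>C. \<forall>y\<in>C. vadd x y \<in> C) \<and> (\<forall>r. \<forall>x\<in>C. zu_smult r x \<in> C)"

definition linear_code_z4 :: "nat \<Rightarrow> 4 list set \<Rightarrow> bool" where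
  "linear_code_z4 N C \<longleftrightarrow> C \<subseteq> {v. length v = N} \<and> replicate N 0 \<in> C \<and>
     (\<forall>x\<in>C. \<forall>y\<in>C. vadd x y \<in> C) \<and> (\<forall>r. \<forall>x\<in>C. z4_smult r x \<in> C)"

definition dual_zu :: "nat \<Rightarrow> zu4 list set \<Rightarrow> zu4 list set" where
  "dual_zu N C = {y. length y = N \<and> (\<forall>c\<in>C. zu_inner c y = 0)}"

definition dual_z4 :: "nat \<Rightarrow> 4 list set \<Rightarrow> 4 list set" where
  "dual_z4 N C = {y. length y = N \<and> (\<forall>c\<in>C. z4_inner c y = 0)}"

definition lee_z4 :: "4 \<Rightarrow> nat" where
  "lee_z4 x = (if x = 0 then 0 else if x = 2 then 2 else 1)"

definition lee_zu :: "zu4 \<Rightarrow> nat" where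
  "lee_zu x = lee_z4 (snd x) + lee_z4 (fst x + snd x)"

definition lee_wt_z4 :: "4 list \<Rightarrow> nat" where
  "lee_wt_z4 v = sum_list (map lee_z4 v)"

definition lee_wt_zu :: "zu4 list \<Rightarrow> nat" where
  "lee_wt_zu v = sum_list (map lee_zu v)"

definition same_weight_enum :: "('v \<Rightarrow> nat) \<Rightarrow> 'v set \<Rightarrow> 'v set \<Rightarrow> bool" where
  "same_weight_enum wt C D \<longleftrightarrow> (\<forall>w. card {c\<in>C. wt c = w} = card {c\<in>D. wt c = w})"

definition formally_self_dual_zu :: "nat \<Rightarrow> zu4 list set \<Rightarrow> bool" where
  "formally_self_dual_zu N C \<longleftrightarrow>
     linear_code_zu N C \<and> same_weight_enum lee_wt_zu C (dual_zu N C)"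

definition formally_self_dual_z4 :: "nat \<Rightarrow> 4 list set \<Rightarrow> bool" where
  "formally_self_dual_z4 N C \<longleftrightarrow>
     linear_code_z4 N C \<and> same_weight_enum lee_wt_z4 C (dual_z4 N C)"

definition gray :: "zu4 list \<Rightarrow> 4 list" where
  "gray v = map snd v @ map (\<lambda>x. fst x + snd x) v"

text \<open>Matrices are functions nat \<Rightarrow> nat \<Rightarrow> zu4 (only entries within the bounds matter).\<close>

definition code_gen :: "nat \<Rightarrow> nat \<Rightarrow> (nat \<Rightarrow> nat \<Rightarrow> zu4) \<Rightarrow> zu4 list set" where
  "code_gen k N G = {map (\<lambda>j. \<Sum>i<k. zu_mult (x ! i) (G i j)) [0..<N] | x. length x = k}"

definition circulant :: "nat \<Rightarrow> (nat \<Rightarrow> nat \<Rightarrow> 'a) \<Rightarrow> bool" where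
  "circulant m M \<longleftrightarrow> (\<forall>i j. Suc i < m \<and> j < m \<longrightarrow> M (Suc i) j = M i ((j + m - 1) mod m))"

definition bordered :: "zu4 \<Rightarrow> zu4 \<Rightarrow> zu4 \<Rightarrow> (nat \<Rightarrow> nat \<Rightarrow> zu4) \<Rightarrow> nat \<Rightarrow> nat \<Rightarrow> zu4" where
  "bordered \<alpha> \<beta> \<gamma> M i j =
     (if i = 0 \<and> j = 0 then \<alpha> else if i = 0 then \<beta> else if j = 0 then \<gamma> else M (i - 1) (j - 1))"

definition gen_matrix :: "nat \<Rightarrow> (nat \<Rightarrow> nat \<Rightarrow> zu4) \<Rightarrow> nat \<Rightarrow> nat \<Rightarrow> zu4" where
  "gen_matrix n B i j = (if j < n then (if i = j then zu_one else 0) else B i (j - n))"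

end

theory Submission
  imports Defs
begin


lemma four0: "(4::4) = 0" by simp
lemma four_mult[simp]: "(4::4) * x = 0" "x * (4::4) = 0"
  by (simp_all only: four0 mult_zero_left mult_zero_right)

lemma zu_eq: "(x::zu4) = y \<longleftrightarrow> fst x = fst y \<and> snd x = snd y"
  by (simp add: prod_eq_iff)

lemma zm_simps[simp]:
  "fst (zu_mult x y) = fst x * fst y"
  "snd (zu_mult x y) = fst x * snd y + snd x * fst y"
  by (simp_all add: zu_mult_def)

lemma zm_one[simp]: "zu_mult x zu_one = x" "zu_mult zu_one x = x"
  by (simp_all add: zu_eq zu_one_def)

lemma zm_zero[simp]: "zu_mult x 0 = 0" "zu_mult 0 x = 0"
  by (simp_all add: zu_eq)

lemma zm_comm: "zu_mult x y = zu_mult y x"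
  by (simp add: zu_eq algebra_simps)

lemma zm_assoc: "zu_mult (zu_mult x y) z = zu_mult x (zu_mult y z)"
  by (simp add: zu_eq algebra_simps)

lemma zm_distrib: "zu_mult x (y + z) = zu_mult x y + zu_mult x z"
  "zu_mult (y + z) x = zu_mult y x + zu_mult z x"
  by (simp_all add: zu_eq algebra_simps)

lemma zm_neg: "zu_mult x (- y) = - zu_mult x y" "zu_mult (- y) x = - zu_mult y x"
  by (simp_all add: zu_eq algebra_simps)

lemma zm_sum: "zu_mult x (sum f A) = (\<Sum>i\<in>A. zu_mult x (f i))"
  "zu_mult (sum f A) x = (\<Sum>i\<in>A. zu_mult (f i) x)"
  by (simp_all add: zu_eq fst_sum snd_sum sum_distrib_left sum_distrib_right sum.distrib algebra_simps)

definition vm :: "nat \<Rightarrow> zu4 list \<Rightarrow> (nat \<Rightarrow> nat \<Rightarrow> zu4) \<Rightarrow> zu4 list" where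
  "vm n x A = map (\<lambda>j. \<Sum>i<n. zu_mult (x!i) (A i j)) [0..<n]"

definition CA :: "nat \<Rightarrow> (nat \<Rightarrow> nat \<Rightarrow> zu4) \<Rightarrow> zu4 list set" where
  "CA n A = {x @ vm n x A | x. length x = n}"

lemma length_vm[simp]: "length (vm n x A) = n" by (simp add: vm_def)
lemma nth_vm: "j < n \<Longrightarrow> vm n x A ! j = (\<Sum>i<n. zu_mult (x!i) (A i j))" by (simp add: vm_def)

lemma code_gen_CA: "code_gen n (2*n) (gen_matrix n B) = CA n B"
proof -
  have "map (\<lambda>j. \<Sum>i<n. zu_mult (x ! i) (gen_matrix n B i j)) [0..<2*n] = x @ vm n x B"
    if "length x = n" for x
  proof (rule nth_equalityI)
    fix k assume "k < length (map (\<lambda>j. \<Sum>i<n. zu_mult (x ! i) (gen_matrix n B i j)) [0..<2*n])"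
    then have k: "k < 2*n" by simp
    show "map (\<lambda>j. \<Sum>i<n. zu_mult (x ! i) (gen_matrix n B i j)) [0..<2*n] ! k = (x @ vm n x B) ! k"
    proof (cases "k < n")
      case True
      have "(\<Sum>i<n. zu_mult (x ! i) (gen_matrix n B i k)) = (\<Sum>i<n. if i = k then x ! i else 0)"
        by (rule sum.cong) (auto simp: gen_matrix_def True)
      also have "\<dots> = x ! k" using True by (simp add: sum.delta')
      finally show ?thesis using True k that by (simp add: nth_append)
    next
      case False
      then show ?thesis using k that by (simp add: nth_append nth_vm gen_matrix_def)
    qed
  qed (simp add: that)
  then show ?thesis unfolding code_gen_def CA_def by (metis (no_types, lifting))
qed

lemma length_vadd[simp]: "length (vadd x y) = min (length x) (length y)"
  by (simp add: vadd_def)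
lemma nth_vadd: "i < length x \<Longrightarrow> i < length y \<Longrightarrow> vadd x y ! i = x!i + y!i"
  by (simp add: vadd_def)
lemma vadd_append: "length x = length y \<Longrightarrow> vadd (x@u) (y@v) = vadd x y @ vadd u v"
  by (simp add: vadd_def)
lemma smult_append: "zu_smult r (x@u) = zu_smult r x @ zu_smult r u"
  by (simp add: zu_smult_def)

lemma vm_add: "length x = n \<Longrightarrow> length y = n \<Longrightarrow> vadd (vm n x A) (vm n y A) = vm n (vadd x y) A"
  by (rule nth_equalityI) (auto simp: nth_vadd nth_vm zm_distrib sum.distrib)

lemma vm_smult: "length x = n \<Longrightarrow> zu_smult r (vm n x A) = vm n (zu_smult r x) A"
  by (rule nth_equalityI) (auto simp: zu_smult_def nth_vm zm_sum zm_assoc)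

lemma linear_CA: "linear_code_zu (2*n) (CA n A)"
  unfolding linear_code_zu_def
proof (intro conjI ballI allI)
  show "CA n A \<subseteq> {v. length v = 2 * n}" by (auto simp: CA_def)
  have "vm n (replicate n 0) A = replicate n 0"
    by (rule nth_equalityI) (auto simp: nth_vm)
  then have "replicate n 0 @ vm n (replicate n 0) A = replicate (2*n) 0"
    by (simp add: replicate_add[symmetric] mult_2)
  then show "replicate (2 * n) 0 \<in> CA n A" unfolding CA_def
    by (metis (mono_tags, lifting) length_replicate mem_Collect_eq)
  fix x y assume "x \<in> CA n A" "y \<in> CA n A"
  then obtain a b where "x = a @ vm n a A" "y = b @ vm n b A" "length a = n" "length b = n"
    by (auto simp: CA_def)
  then show "vadd x y \<in> CA n A" unfolding CA_def
    by (auto simp: vadd_append vm_add intro!: exI[of _ "vadd a b"])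
next
  fix r x assume "x \<in> CA n A"
  then obtain a where "x = a @ vm n a A" "length a = n"
    by (auto simp: CA_def)
  moreover have "zu_smult r (vm n a A) = vm n (zu_smult r a) A" using \<open>length a = n\<close> by (rule vm_smult)
  moreover have "length (zu_smult r a) = n" using \<open>length a = n\<close> by (simp add: zu_smult_def)
  ultimately show "zu_smult r x \<in> CA n A" unfolding CA_def
    by (auto simp: smult_append)
qed



lemma z4_cases: "(x::4) = 0 \<or> x = 1 \<or> x = 2 \<or> x = 3"
proof (cases x)
  case (of_int z)
  then have "z = 0 \<or> z = 1 \<or> z = 2 \<or> z = 3" by auto
  then show ?thesis using of_int by auto
qed

lemma lee_z4_neg[simp]: "lee_z4 (- x) = lee_z4 x"
  using z4_cases[of x] by (auto simp: lee_z4_def)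

lemma lee_zu_neg[simp]: "lee_zu (- x) = lee_zu x"
proof (cases x)
  case (Pair a b)
  have "- a + - b = - (a + b)" by simp
  then show ?thesis using Pair unfolding lee_zu_def by (metis lee_z4_neg fst_conv snd_conv uminus_Pair)
qed

definition wteq :: "('a \<Rightarrow> nat) \<Rightarrow> 'a set \<Rightarrow> ('b \<Rightarrow> nat) \<Rightarrow> 'b set \<Rightarrow> bool" where
  "wteq w1 X w2 Y \<longleftrightarrow> (\<forall>w. card {x\<in>X. w1 x = w} = card {y\<in>Y. w2 y = w})"

lemma wteq_bij:
  assumes "bij_betw h X Y" "\<And>x. x \<in> X \<Longrightarrow> w2 (h x) = w1 x"
  shows "wteq w1 X w2 Y"
  unfolding wteq_def
proof
  fix w
  have "bij_betw h {x\<in>X. w1 x = w} {y\<in>Y. w2 y = w}"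
  proof (rule bij_betw_subset[OF assms(1)])
    show "h ` {x \<in> X. w1 x = w} = {y \<in> Y. w2 y = w}"
    proof
      show "h ` {x \<in> X. w1 x = w} \<subseteq> {y \<in> Y. w2 y = w}"
        using assms bij_betw_apply by fastforce
      show "{y \<in> Y. w2 y = w} \<subseteq> h ` {x \<in> X. w1 x = w}"
      proof
        fix y assume y: "y \<in> {y \<in> Y. w2 y = w}"
        then obtain x where "x \<in> X" "y = h x" using assms(1) by (auto simp: bij_betw_def)
        then show "y \<in> h ` {x \<in> X. w1 x = w}" using y assms(2) by auto
      qed
    qed
  qed auto
  then show "card {x\<in>X. w1 x = w} = card {y\<in>Y. w2 y = w}" by (rule bij_betw_same_card)
qed

lemma wteq_trans: "wteq w1 X w2 Y \<Longrightarrow> wteq w2 Y w3 Z \<Longrightarrow> wteq w1 X w3 Z"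
  by (simp add: wteq_def)
lemma wteq_sym: "wteq w1 X w2 Y \<Longrightarrow> wteq w2 Y w1 X"
  by (simp add: wteq_def)

lemma lee_wt_zu_sum: "lee_wt_zu v = (\<Sum>i<length v. lee_zu (v!i))"
  unfolding lee_wt_zu_def by (simp add: sum_list_sum_nth atLeast0LessThan)
lemma lee_wt_z4_sum: "lee_wt_z4 v = (\<Sum>i<length v. lee_z4 (v!i))"
  unfolding lee_wt_z4_def by (simp add: sum_list_sum_nth atLeast0LessThan)

definition sg :: "bool \<Rightarrow> zu4 \<Rightarrow> zu4" where "sg b y = (if b then - y else y)"

lemma sg_sg: "sg a (sg b y) = sg (a \<noteq> b) y" by (simp add: sg_def)
lemma sg_False[simp]: "sg False y = y" by (simp add: sg_def)
lemma sg_same[simp]: "sg a (sg a y) = y" by (simp add: sg_def)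
lemma zm_sg: "zu_mult x (sg b y) = sg b (zu_mult x y)" "zu_mult (sg b y) x = sg b (zu_mult y x)"
  by (simp_all add: sg_def zm_neg)
lemma sg_sum: "sg b (sum f A) = (\<Sum>i\<in>A. sg b (f i))"
  by (simp add: sg_def sum_negf)
lemma lee_sg[simp]: "lee_zu (sg b y) = lee_zu y" by (simp add: sg_def)

lemma sum_involution:
  assumes "\<forall>i<n. \<sigma> i < n \<and> \<sigma> (\<sigma> i) = i"
  shows "(\<Sum>i<n. f (\<sigma> i)) = (\<Sum>i<(n::nat). f i)"
proof -
  have "bij_betw \<sigma> {..<n} {..<n}"
    by (rule bij_betw_byWitness[where f'=\<sigma>]) (use assms in auto)
  then show ?thesis by (rule sum.reindex_bij_betw)
qed

locale tmloc =
  fixes n :: nat and \<sigma> :: "nat \<Rightarrow> nat" and e :: "nat \<Rightarrow> bool" and d :: bool and \<tau> :: "zu4 \<Rightarrow> zu4"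
  assumes sig: "\<forall>i<n. \<sigma> i < n \<and> \<sigma> (\<sigma> i) = i"
    and esig: "\<forall>i<n. e (\<sigma> i) = e i"
    and tadd: "\<And>x y. \<tau> (x + y) = \<tau> x + \<tau> y"
    and tmul: "\<And>x y. \<tau> (zu_mult x y) = zu_mult (\<tau> x) (\<tau> y)"
    and tinv: "\<And>x. \<tau> (\<tau> x) = x"
    and tlee: "\<And>x. lee_zu (\<tau> x) = lee_zu x"
begin

lemma t0: "\<tau> 0 = 0"
  using tadd[of 0 0] by simp
lemma tneg: "\<tau> (- x) = - \<tau> x"
  using tadd[of x "-x"] t0 by (simp add: eq_neg_iff_add_eq_0 add.commute)
lemma tsg: "\<tau> (sg b x) = sg b (\<tau> x)"
  by (simp add: sg_def tneg)
lemma tsum: "\<tau> (sum f A) = (\<Sum>i\<in>A. \<tau> (f i))"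
  by (induction A rule: infinite_finite_induct) (auto simp: t0 tadd)

definition Tm :: "zu4 list \<Rightarrow> zu4 list" where
  "Tm v = map (\<lambda>i. sg (e i) (\<tau> (v!\<sigma> i))) [0..<n] @ map (\<lambda>j. sg (d \<noteq> e j) (\<tau> (v!(n + \<sigma> j)))) [0..<n]"

definition Rel :: "(nat \<Rightarrow> nat \<Rightarrow> zu4) \<Rightarrow> (nat \<Rightarrow> nat \<Rightarrow> zu4) \<Rightarrow> bool" where
  "Rel A B \<longleftrightarrow> (\<forall>i<n. \<forall>j<n. A i j = sg (e i) (sg (d \<noteq> e j) (\<tau> (B (\<sigma> i) (\<sigma> j)))))"

lemma length_Tm[simp]: "length (Tm v) = 2*n" by (simp add: Tm_def)

lemma Rel_sym: "Rel A B \<Longrightarrow> Rel B A"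
  unfolding Rel_def
proof (intro allI impI)
  fix i j assume R: "\<forall>i<n. \<forall>j<n. A i j = sg (e i) (sg (d \<noteq> e j) (\<tau> (B (\<sigma> i) (\<sigma> j))))"
    and ij: "i < n" "j < n"
  have "A (\<sigma> i) (\<sigma> j) = sg (e i) (sg (d \<noteq> e j) (\<tau> (B i j)))"
    using R sig esig ij by auto
  then show "B i j = sg (e i) (sg (d \<noteq> e j) (\<tau> (A (\<sigma> i) (\<sigma> j))))"
    by (simp add: tsg tinv sg_def tneg)
qed

lemma Tm_Tm: "length v = 2*n \<Longrightarrow> Tm (Tm v) = v"
proof (rule nth_equalityI)
  fix k assume v: "length v = 2*n" and k: "k < length (Tm (Tm v))"
  show "Tm (Tm v) ! k = v ! k"
  proof (cases "k < n")
    case True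
    then show ?thesis using sig esig by (simp add: Tm_def nth_append tsg tinv)
  next
    case False
    then obtain j where j: "k = n + j" "j < n" using k by (metis add_diff_inverse_nat length_Tm add_less_cancel_left mult_2)
    then show ?thesis using sig esig by (simp add: Tm_def nth_append tsg tinv)
  qed
qed simp

lemma lee_Tm: "length v = 2*n \<Longrightarrow> lee_wt_zu (Tm v) = lee_wt_zu v"
proof -
  assume v: "length v = 2*n"
  have lm: "lee_wt_zu (map f [0..<n]) = (\<Sum>i<n. lee_zu (f i))" for f
    unfolding lee_wt_zu_def by (simp add: interv_sum_list_conv_sum_set_nat atLeast0LessThan comp_def)
  have app: "lee_wt_zu (a @ b) = lee_wt_zu a + lee_wt_zu b" for a b
    by (simp add: lee_wt_zu_def)
  have "lee_wt_zu (Tm v) = (\<Sum>i<n. lee_zu (v!\<sigma> i)) + (\<Sum>i<n. lee_zu (v!(n+\<sigma> i)))"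
    by (simp add: Tm_def app lm tlee)
  also have "\<dots> = (\<Sum>i<n. lee_zu (v!i)) + (\<Sum>i<n. lee_zu (v!(n+i)))"
    using sum_involution[OF sig, of "\<lambda>i. lee_zu (v!i)"] sum_involution[OF sig, of "\<lambda>i. lee_zu (v!(n+i))"] by simp
  also have "\<dots> = lee_wt_zu (take n v) + lee_wt_zu (drop n v)"
    using v by (simp add: lee_wt_zu_sum)
  also have "\<dots> = lee_wt_zu v" by (simp add: app[symmetric])
  finally show ?thesis .
qed

lemma Tm_CA: assumes R: "Rel A B" and w: "w \<in> CA n B" shows "Tm w \<in> CA n A"
proof -
  obtain x where x: "w = x @ vm n x B" "length x = n" using w by (auto simp: CA_def)
  define x' where "x' = map (\<lambda>i. sg (e i) (\<tau> (x!\<sigma> i))) [0..<n]"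
  have "Tm w = x' @ vm n x' A"
  proof -
    have 1: "map (\<lambda>i. sg (e i) (\<tau> (w!\<sigma> i))) [0..<n] = x'"
      using x sig by (simp add: x'_def nth_append)
    have 2: "map (\<lambda>j. sg (d \<noteq> e j) (\<tau> (w!(n + \<sigma> j)))) [0..<n] = vm n x' A"
    proof (rule nth_equalityI)
      fix j assume "j < length (map (\<lambda>j. sg (d \<noteq> e j) (\<tau> (w!(n + \<sigma> j)))) [0..<n])"
      then have j: "j < n" by simp
      have "vm n x' A ! j = (\<Sum>i<n. zu_mult (x'!i) (A i j))" using j by (simp add: nth_vm)
      also have "\<dots> = (\<Sum>i<n. sg (d \<noteq> e j) (\<tau> (zu_mult (x!\<sigma> i) (B (\<sigma> i) (\<sigma> j)))))"
        using R j unfolding Rel_def by (intro sum.cong) (auto simp: x'_def zm_sg tmul sg_def zm_neg)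
      also have "\<dots> = (\<Sum>i<n. sg (d \<noteq> e j) (\<tau> (zu_mult (x!i) (B i (\<sigma> j)))))"
        by (rule sum_involution[OF sig])
      also have "\<dots> = sg (d \<noteq> e j) (\<tau> (w!(n + \<sigma> j)))"
        using x sig j by (simp add: nth_append nth_vm sg_sum tsum)
      finally show "map (\<lambda>j. sg (d \<noteq> e j) (\<tau> (w!(n + \<sigma> j)))) [0..<n] ! j = vm n x' A ! j"
        using j by simp
    qed simp
    show ?thesis unfolding Tm_def 1 2 ..
  qed
  moreover have "length x' = n" by (simp add: x'_def)
  ultimately show ?thesis by (auto simp: CA_def)
qed

lemma Tm_wteq: assumes "Rel A B" shows "wteq lee_wt_zu (CA n B) lee_wt_zu (CA n A)"
proof (rule wteq_bij)
  have len: "\<And>v C. v \<in> CA n C \<Longrightarrow> length v = 2*n" by (auto simp: CA_def)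
  show "bij_betw Tm (CA n B) (CA n A)"
    by (rule bij_betw_byWitness[where f'=Tm])
       (use assms Rel_sym Tm_CA Tm_Tm len in blast)+
  show "\<And>x. x \<in> CA n B \<Longrightarrow> lee_wt_zu (Tm x) = lee_wt_zu x" using lee_Tm len by blast
qed

end



lemma zu_inner_nth: "length a = length b \<Longrightarrow> zu_inner a b = (\<Sum>i<length a. zu_mult (a!i) (b!i))"
  unfolding zu_inner_def by (simp add: sum_list_sum_nth atLeast0LessThan)

lemma zu_inner_append: "length a1 = length b1 \<Longrightarrow> zu_inner (a1@a2) (b1@b2) = zu_inner a1 b1 + zu_inner a2 b2"
  unfolding zu_inner_def by simp

definition tr :: "(nat \<Rightarrow> nat \<Rightarrow> 'a) \<Rightarrow> nat \<Rightarrow> nat \<Rightarrow> 'a" where "tr B i j = B j i"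

definition DZ :: "nat \<Rightarrow> (nat \<Rightarrow> nat \<Rightarrow> zu4) \<Rightarrow> zu4 list set" where
  "DZ n B = {map uminus (vm n z (tr B)) @ z | z. length z = n}"

lemma inner_CA:
  assumes "length x = n" "length y1 = n" "length y2 = n"
  shows "zu_inner (x @ vm n x B) (y1 @ y2) = (\<Sum>j<n. zu_mult (x!j) (y1!j + (\<Sum>k<n. zu_mult (B j k) (y2!k))))"
proof -
  have "zu_inner (vm n x B) y2 = (\<Sum>k<n. \<Sum>j<n. zu_mult (x!j) (zu_mult (B j k) (y2!k)))"
    using assms by (simp add: zu_inner_nth nth_vm zm_sum zm_assoc)
  also have "\<dots> = (\<Sum>j<n. \<Sum>k<n. zu_mult (x!j) (zu_mult (B j k) (y2!k)))"
    by (rule sum.swap)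
  finally have "zu_inner (vm n x B) y2 = (\<Sum>j<n. zu_mult (x!j) (\<Sum>k<n. zu_mult (B j k) (y2!k)))"
    by (simp add: zm_sum)
  moreover have "zu_inner (x @ vm n x B) (y1 @ y2) = zu_inner x y1 + zu_inner (vm n x B) y2"
    by (rule zu_inner_append) (simp add: assms)
  ultimately show ?thesis using assms
    by (simp add: zu_inner_nth zm_distrib sum.distrib)
qed

lemma dual_CA: "dual_zu (2*n) (CA n B) = DZ n B"
proof
  show "dual_zu (2*n) (CA n B) \<subseteq> DZ n B"
  proof
    fix y assume y: "y \<in> dual_zu (2*n) (CA n B)"
    define y1 where "y1 = take n y"
    define z where "z = drop n y"
    have ly: "length y = 2*n" using y by (simp add: dual_zu_def)
    have yy: "y = y1 @ z" by (simp add: y1_def z_def)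
    have l1: "length y1 = n" "length z = n" using ly by (auto simp: y1_def z_def)
    have eq: "y1!j + (\<Sum>k<n. zu_mult (B j k) (z!k)) = 0" if j: "j < n" for j
    proof -
      define x where "x = map (\<lambda>i. if i = j then zu_one else 0) [0..<n]"
      have "x @ vm n x B \<in> CA n B" by (auto simp: CA_def x_def)
      then have "zu_inner (x @ vm n x B) y = 0" using y by (simp add: dual_zu_def)
      then have "(\<Sum>i<n. zu_mult (x!i) (y1!i + (\<Sum>k<n. zu_mult (B i k) (z!k)))) = 0"
        using inner_CA[of x n y1 z B] l1 yy by (simp add: x_def)
      moreover have "(\<Sum>i<n. zu_mult (x!i) (y1!i + (\<Sum>k<n. zu_mult (B i k) (z!k))))
          = (\<Sum>i<n. if i = j then y1!i + (\<Sum>k<n. zu_mult (B i k) (z!k)) else 0)"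
        by (rule sum.cong) (auto simp: x_def)
      ultimately show ?thesis using j by (simp add: sum.delta')
    qed
    have "y1 = map uminus (vm n z (tr B))"
    proof (rule nth_equalityI)
      fix j assume "j < length y1"
      then have j: "j < n" using l1 by simp
      show "y1 ! j = map uminus (vm n z (tr B)) ! j"
        using eq[OF j] j by (simp add: nth_vm tr_def zm_comm eq_neg_iff_add_eq_0)
    qed (simp add: l1)
    then show "y \<in> DZ n B" using yy l1 by (auto simp: DZ_def)
  qed
  show "DZ n B \<subseteq> dual_zu (2*n) (CA n B)"
  proof
    fix y assume "y \<in> DZ n B"
    then obtain z where z: "y = map uminus (vm n z (tr B)) @ z" "length z = n" by (auto simp: DZ_def)
    have "zu_inner c y = 0" if c: "c \<in> CA n B" for c
    proof -
      obtain x where x: "c = x @ vm n x B" "length x = n" using c by (auto simp: CA_def)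
      have "zu_inner c y = (\<Sum>j<n. zu_mult (x!j) ((map uminus (vm n z (tr B)))!j + (\<Sum>k<n. zu_mult (B j k) (z!k))))"
        using inner_CA[of x n "map uminus (vm n z (tr B))" z B] x z by simp
      also have "\<dots> = 0"
        by (rule sum.neutral) (auto simp: nth_vm tr_def zm_comm)
      finally show ?thesis .
    qed
    then show "y \<in> dual_zu (2*n) (CA n B)" using z by (simp add: dual_zu_def)
  qed
qed

lemma lee_append: "lee_wt_zu (a @ b) = lee_wt_zu a + lee_wt_zu b"
  by (simp add: lee_wt_zu_def)
lemma lee_uminus: "lee_wt_zu (map uminus a) = lee_wt_zu a"
  by (simp add: lee_wt_zu_def comp_def)

lemma DZ_wteq: "wteq lee_wt_zu (DZ n B) lee_wt_zu (CA n (tr B))"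
proof (rule wteq_bij[where h="\<lambda>v. drop n v @ map uminus (take n v)"])
  show "bij_betw (\<lambda>v. drop n v @ map uminus (take n v)) (DZ n B) (CA n (tr B))"
  proof (rule bij_betw_byWitness[where f'="\<lambda>v. map uminus (drop n v) @ take n v"])
    show "\<forall>a\<in>DZ n B. map uminus (drop n (drop n a @ map uminus (take n a))) @ take n (drop n a @ map uminus (take n a)) = a"
      by (auto simp: DZ_def comp_def)
    show "\<forall>a'\<in>CA n (tr B). drop n (map uminus (drop n a') @ take n a') @ map uminus (take n (map uminus (drop n a') @ take n a')) = a'"
      by (auto simp: CA_def comp_def)
    show "(\<lambda>v. drop n v @ map uminus (take n v)) ` DZ n B \<subseteq> CA n (tr B)"
      by (auto simp: DZ_def CA_def comp_def)
    show "(\<lambda>v. map uminus (drop n v) @ take n v) ` CA n (tr B) \<subseteq> DZ n B"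
      by (auto simp: DZ_def CA_def comp_def)
  qed
  show "\<And>x. x \<in> DZ n B \<Longrightarrow> lee_wt_zu (drop n x @ map uminus (take n x)) = lee_wt_zu x"
    by (auto simp: DZ_def lee_append lee_uminus)
qed



lemma circ_lemma:
  assumes c: "circulant m M"
  shows "a < m \<Longrightarrow> b < m \<Longrightarrow> M a b = M 0 ((b + (m - a)) mod m)"
proof (induction a arbitrary: b)
  case 0
  then show ?case by simp
next
  case (Suc a)
  have "M (Suc a) b = M a ((b + m - 1) mod m)" using c Suc.prems unfolding circulant_def by auto
  also have "\<dots> = M 0 (((b + m - 1) mod m + (m - a)) mod m)"
    using Suc by simp
  also have "((b + m - 1) mod m + (m - a)) mod m = (b + (m - Suc a)) mod m"
  proof -
    have "((b + m - 1) mod m + (m - a)) mod m = (b + m - 1 + (m - a)) mod m"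
      by (simp add: mod_add_left_eq)
    also have "b + m - 1 + (m - a) = (b + (m - Suc a)) + m" using Suc.prems by simp
    also have "((b + (m - Suc a)) + m) mod m = (b + (m - Suc a)) mod m" by simp
    finally show ?thesis .
  qed
  finally show ?case .
qed

definition sig :: "nat \<Rightarrow> nat \<Rightarrow> nat" where "sig n i = (if i \<le> 1 then i else n + 1 - i)"
definition ee :: "zu4 \<Rightarrow> zu4 \<Rightarrow> nat \<Rightarrow> bool" where "ee \<beta> \<gamma> i = (i = 0 \<and> \<gamma> \<noteq> \<beta>)"

lemma sig_props: "\<forall>i<n. sig n i < n \<and> sig n (sig n i) = i"
  by (auto simp: sig_def)

lemma ee_sig: "\<forall>i<n. ee \<beta> \<gamma> (sig n i) = ee \<beta> \<gamma> i"
  by (auto simp: sig_def ee_def)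

lemma transpose_rel:
  assumes n: "n \<ge> 2" and c: "circulant (n - 1) M" and g: "\<gamma> = \<beta> \<or> \<gamma> = - \<beta>"
    and ij: "i < n" "j < n"
  shows "tr (bordered \<alpha> \<beta> \<gamma> M) i j
     = sg (ee \<beta> \<gamma> i) (sg (False \<noteq> ee \<beta> \<gamma> j) (id (bordered \<alpha> \<beta> \<gamma> M (sig n i) (sig n j))))"
proof -
  have sg0: "sig n i = 0 \<longleftrightarrow> i = 0" "sig n j = 0 \<longleftrightarrow> j = 0" using ij n by (auto simp: sig_def)
  consider "i = 0" "j = 0" | "i = 0" "j \<noteq> 0" | "i \<noteq> 0" "j = 0" | "i \<noteq> 0" "j \<noteq> 0" by blast
  then show ?thesis
  proof cases
    case 1 then show ?thesis by (simp add: tr_def bordered_def sig_def ee_def)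
  next
    case 2 then show ?thesis using g sg0 by (auto simp: tr_def bordered_def ee_def sg_def)
  next
    case 3 then show ?thesis using g sg0 by (auto simp: tr_def bordered_def ee_def sg_def)
  next
    case 4
    let ?m = "n - 1"
    define k where "k = i - 1"
    define l where "l = j - 1"
    have kl: "k < ?m" "l < ?m" using 4 ij by (auto simp: k_def l_def)
    have si: "sig n i - 1 = (if k = 0 then 0 else ?m - k)" "sig n j - 1 = (if l = 0 then 0 else ?m - l)"
      using 4 ij n by (auto simp: sig_def k_def l_def)
    have lhs: "tr (bordered \<alpha> \<beta> \<gamma> M) i j = M 0 ((k + (?m - l)) mod ?m)"
      using 4 circ_lemma[OF c, of l k] kl by (simp add: tr_def bordered_def k_def l_def)
    have rhs0: "bordered \<alpha> \<beta> \<gamma> M (sig n i) (sig n j) = M (sig n i - 1) (sig n j - 1)"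
      using sg0 4 by (simp add: bordered_def)
    have r1: "sig n i - 1 < ?m" "sig n j - 1 < ?m" using si kl by auto
    have rhs: "bordered \<alpha> \<beta> \<gamma> M (sig n i) (sig n j) = M 0 (((sig n j - 1) + (?m - (sig n i - 1))) mod ?m)"
      using rhs0 circ_lemma[OF c r1(1) r1(2)] by simp
    have "(k + (?m - l)) mod ?m = (((sig n j - 1) + (?m - (sig n i - 1))) mod ?m)"
    proof -
      consider "k = 0" "l = 0" | "k = 0" "l \<noteq> 0" | "k \<noteq> 0" "l = 0" | "k \<noteq> 0" "l \<noteq> 0" by blast
      then show ?thesis
      proof cases
        case 1 then show ?thesis using si by simp
      next
        case 2
        have "(?m - l) + ?m = ((sig n j - 1) + (?m - (sig n i - 1)))" using si 2 kl by simp
        then show ?thesis using 2 by (metis add_0 mod_add_self2)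
      next
        case 3
        have "k + ?m = (k + (?m - l))" using 3 by simp
        moreover have "((sig n j - 1) + (?m - (sig n i - 1))) = k" using si 3 kl by simp
        ultimately show ?thesis by (metis mod_add_self2)
      next
        case 4
        have "(k + (?m - l)) = ((sig n j - 1) + (?m - (sig n i - 1)))" using si 4 kl by simp
        then show ?thesis by simp
      qed
    qed
    then show ?thesis using lhs rhs 4 by (simp add: ee_def)
  qed
qed



lemma z4_inner_nth: "length a = length b \<Longrightarrow> z4_inner a b = (\<Sum>i<length a. (a!i) * (b!i))"
  unfolding z4_inner_def by (simp add: sum_list_sum_nth atLeast0LessThan)

lemma z4_inner_append: "length a1 = length b1 \<Longrightarrow> z4_inner (a1@a2) (b1@b2) = z4_inner a1 b1 + z4_inner a2 b2"
  unfolding z4_inner_def by simp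

definition fs :: "zu4 \<Rightarrow> 4" where "fs p = fst p + snd p"

lemma gray_app: "gray (x @ w) = map snd x @ map snd w @ map fs x @ map fs w"
  by (simp add: gray_def fs_def)

definition Ef :: "nat \<Rightarrow> (nat \<Rightarrow> nat \<Rightarrow> zu4) \<Rightarrow> 4 list \<Rightarrow> 4 list \<Rightarrow> 4 list \<Rightarrow> 4 list \<Rightarrow> nat \<Rightarrow> 4" where
  "Ef n B y1 y2 y3 y4 j = y3!j + (\<Sum>k<n. snd (B j k) * y2!k + (fst (B j k) + snd (B j k)) * y4!k)"
definition Ff :: "nat \<Rightarrow> (nat \<Rightarrow> nat \<Rightarrow> zu4) \<Rightarrow> 4 list \<Rightarrow> 4 list \<Rightarrow> 4 list \<Rightarrow> 4 list \<Rightarrow> nat \<Rightarrow> 4" where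
  "Ff n B y1 y2 y3 y4 j = y1!j + y3!j + (\<Sum>k<n. fst (B j k) * (y2!k + y4!k))"

lemma inner_gray:
  assumes l: "length x = n" "length y1 = n" "length y2 = n" "length y3 = n" "length y4 = n"
  shows "z4_inner (gray (x @ vm n x B)) (y1@y2@y3@y4)
    = (\<Sum>j<n. fst (x!j) * Ef n B y1 y2 y3 y4 j + snd (x!j) * Ff n B y1 y2 y3 y4 j)"
proof -
  have "z4_inner (gray (x @ vm n x B)) (y1@y2@y3@y4) =
     z4_inner (map snd x) y1 + z4_inner (map snd (vm n x B)) y2 + z4_inner (map fs x) y3 + z4_inner (map fs (vm n x B)) y4"
    using l by (simp add: gray_app z4_inner_append add.assoc)
  also have "\<dots> = (\<Sum>j<n. snd (x!j) * y1!j) + (\<Sum>k<n. \<Sum>j<n. (fst (x!j) * snd (B j k) + snd (x!j) * fst (B j k)) * y2!k)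
      + (\<Sum>j<n. (fst (x!j) + snd (x!j)) * y3!j) + (\<Sum>k<n. \<Sum>j<n. (fst (x!j) * fst (B j k) + fst (x!j) * snd (B j k) + snd (x!j) * fst (B j k)) * y4!k)"
  proof -
    have a: "z4_inner (map snd x) y1 = (\<Sum>j<n. snd (x!j) * y1!j)" using l by (simp add: z4_inner_nth)
    have b: "z4_inner (map fs x) y3 = (\<Sum>j<n. (fst (x!j) + snd (x!j)) * y3!j)" using l by (simp add: z4_inner_nth fs_def)
    have c: "z4_inner (map snd (vm n x B)) y2 = (\<Sum>k<n. \<Sum>j<n. (fst (x!j) * snd (B j k) + snd (x!j) * fst (B j k)) * y2!k)"
      using l by (simp add: z4_inner_nth nth_vm snd_sum sum_distrib_right)
    have d: "z4_inner (map fs (vm n x B)) y4 = (\<Sum>k<n. \<Sum>j<n. (fst (x!j) * fst (B j k) + fst (x!j) * snd (B j k) + snd (x!j) * fst (B j k)) * y4!k)"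
      using l by (simp add: z4_inner_nth nth_vm fs_def snd_sum fst_sum sum_distrib_right sum.distrib[symmetric] add.assoc)
    show ?thesis using a b c d by simp
  qed
  also have "\<dots> = (\<Sum>j<n. snd (x!j) * y1!j) + (\<Sum>j<n. \<Sum>k<n. (fst (x!j) * snd (B j k) + snd (x!j) * fst (B j k)) * y2!k)
      + (\<Sum>j<n. (fst (x!j) + snd (x!j)) * y3!j) + (\<Sum>j<n. \<Sum>k<n. (fst (x!j) * fst (B j k) + fst (x!j) * snd (B j k) + snd (x!j) * fst (B j k)) * y4!k)"
    by (simp only: sum.swap[of "\<lambda>k j. (fst (x!j) * snd (B j k) + snd (x!j) * fst (B j k)) * y2!k" "{..<n}" "{..<n}"]
      sum.swap[of "\<lambda>k j. (fst (x!j) * fst (B j k) + fst (x!j) * snd (B j k) + snd (x!j) * fst (B j k)) * y4!k" "{..<n}" "{..<n}"])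
  also have "\<dots> = (\<Sum>j<n. fst (x!j) * Ef n B y1 y2 y3 y4 j + snd (x!j) * Ff n B y1 y2 y3 y4 j)"
  proof -
    have "(\<Sum>j<n. snd (x!j) * y1!j) + (\<Sum>j<n. \<Sum>k<n. (fst (x!j) * snd (B j k) + snd (x!j) * fst (B j k)) * y2!k)
      + (\<Sum>j<n. (fst (x!j) + snd (x!j)) * y3!j) + (\<Sum>j<n. \<Sum>k<n. (fst (x!j) * fst (B j k) + fst (x!j) * snd (B j k) + snd (x!j) * fst (B j k)) * y4!k)
      = (\<Sum>j<n. snd (x!j) * y1!j + (\<Sum>k<n. (fst (x!j) * snd (B j k) + snd (x!j) * fst (B j k)) * y2!k)
      + (fst (x!j) + snd (x!j)) * y3!j + (\<Sum>k<n. (fst (x!j) * fst (B j k) + fst (x!j) * snd (B j k) + snd (x!j) * fst (B j k)) * y4!k))"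
      by (simp only: sum.distrib)
    also have "\<dots> = (\<Sum>j<n. fst (x!j) * Ef n B y1 y2 y3 y4 j + snd (x!j) * Ff n B y1 y2 y3 y4 j)"
    proof (rule sum.cong[OF refl])
      fix j
      show "snd (x!j) * y1!j + (\<Sum>k<n. (fst (x!j) * snd (B j k) + snd (x!j) * fst (B j k)) * y2!k)
      + (fst (x!j) + snd (x!j)) * y3!j + (\<Sum>k<n. (fst (x!j) * fst (B j k) + fst (x!j) * snd (B j k) + snd (x!j) * fst (B j k)) * y4!k)
        = fst (x!j) * Ef n B y1 y2 y3 y4 j + snd (x!j) * Ff n B y1 y2 y3 y4 j"
      proof -
        let ?a = "fst (x!j)" and ?b = "snd (x!j)"
        let ?S2 = "(\<Sum>k<n. (?a * snd (B j k) + ?b * fst (B j k)) * y2!k)"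
        let ?S4 = "(\<Sum>k<n. (?a * fst (B j k) + ?a * snd (B j k) + ?b * fst (B j k)) * y4!k)"
        let ?T1 = "(\<Sum>k<n. snd (B j k) * y2!k + (fst (B j k) + snd (B j k)) * y4!k)"
        let ?T2 = "(\<Sum>k<n. fst (B j k) * (y2!k + y4!k))"
        have "?S2 + ?S4 = (\<Sum>k<n. (?a * snd (B j k) + ?b * fst (B j k)) * y2!k + (?a * fst (B j k) + ?a * snd (B j k) + ?b * fst (B j k)) * y4!k)"
          by (rule sum.distrib[symmetric])
        also have "\<dots> = (\<Sum>k<n. ?a * (snd (B j k) * y2!k + (fst (B j k) + snd (B j k)) * y4!k) + ?b * (fst (B j k) * (y2!k + y4!k)))"
          by (rule sum.cong[OF refl]) (simp add: algebra_simps)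
        also have "\<dots> = ?a * ?T1 + ?b * ?T2"
          unfolding sum_distrib_left by (rule sum.distrib)
        finally have st: "?S2 + ?S4 = ?a * ?T1 + ?b * ?T2" .
        have gen: "\<And>(a::4) b y1 y3 S2 S4 T1 T2. S2 + S4 = a*T1 + b*T2 \<Longrightarrow>
            b*y1 + S2 + (a+b)*y3 + S4 = a*(y3 + T1) + b*(y1 + y3 + T2)"
          by (simp add: algebra_simps)
        show ?thesis unfolding Ef_def Ff_def by (rule gen[OF st])
      qed
    qed
    finally show ?thesis .
  qed
  finally show ?thesis .
qed



definition gt :: "zu4 \<Rightarrow> zu4" where "gt x = (fst x - 2 * snd x, - snd x)"
definition At :: "(nat \<Rightarrow> nat \<Rightarrow> zu4) \<Rightarrow> nat \<Rightarrow> nat \<Rightarrow> zu4" where "At B i j = - gt (B j i)"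

definition GD :: "nat \<Rightarrow> (nat \<Rightarrow> nat \<Rightarrow> zu4) \<Rightarrow> zu4 list \<Rightarrow> 4 list" where
  "GD n A z = map snd (vm n z A) @ map snd z @ map fs (vm n z A) @ map fs z"

lemma fs_sum: "fs (sum f A) = (\<Sum>i\<in>A. fs (f i))"
  by (simp add: fs_def fst_sum snd_sum sum.distrib)

lemma eq4: "X - Y = 4 * W \<Longrightarrow> (X::4) = Y" by simp

lemma At_fst: "fst (At B i j) = 2 * snd (B j i) - fst (B j i)" by (simp add: At_def gt_def)
lemma At_snd: "snd (At B i j) = snd (B j i)" by (simp add: At_def gt_def)

lemma GD_EF:
  assumes z: "length z = n" and j: "j < n"
  shows "Ef n B (map snd (vm n z (At B))) (map snd z) (map fs (vm n z (At B))) (map fs z) j = 0"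
    "Ff n B (map snd (vm n z (At B))) (map snd z) (map fs (vm n z (At B))) (map fs z) j = 0"
proof -
  show "Ef n B (map snd (vm n z (At B))) (map snd z) (map fs (vm n z (At B))) (map fs z) j = 0"
  proof -
    have "Ef n B (map snd (vm n z (At B))) (map snd z) (map fs (vm n z (At B))) (map fs z) j
      = (\<Sum>k<n. fs (zu_mult (z!k) (At B k j)) + (snd (B j k) * snd (z!k) + (fst (B j k) + snd (B j k)) * fs (z!k)))"
      using z j by (simp add: Ef_def nth_vm fs_sum sum.distrib)
    also have "\<dots> = 0"
    proof (rule sum.neutral, rule ballI)
      fix k
      show "fs (zu_mult (z!k) (At B k j)) + (snd (B j k) * snd (z!k) + (fst (B j k) + snd (B j k)) * fs (z!k)) = 0"
        by (rule eq4[where W="snd (B j k) * fst (z!k) + snd (B j k) * snd (z!k)"])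
           (simp add: fs_def At_fst At_snd algebra_simps)
    qed
    finally show ?thesis .
  qed
  show "Ff n B (map snd (vm n z (At B))) (map snd z) (map fs (vm n z (At B))) (map fs z) j = 0"
  proof -
    have "Ff n B (map snd (vm n z (At B))) (map snd z) (map fs (vm n z (At B))) (map fs z) j
      = (\<Sum>k<n. snd (zu_mult (z!k) (At B k j)) + fs (zu_mult (z!k) (At B k j)) + fst (B j k) * (snd (z!k) + fs (z!k)))"
      using z j by (simp add: Ff_def nth_vm fs_sum snd_sum sum.distrib)
    also have "\<dots> = 0"
    proof (rule sum.neutral, rule ballI)
      fix k
      show "snd (zu_mult (z!k) (At B k j)) + fs (zu_mult (z!k) (At B k j)) + fst (B j k) * (snd (z!k) + fs (z!k)) = 0"
        by (rule eq4[where W="snd (B j k) * fst (z!k) + snd (B j k) * snd (z!k)"])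
           (simp add: fs_def At_fst At_snd algebra_simps)
    qed
    finally show ?thesis .
  qed
qed



lemma split4: "y = take n y @ take n (drop n y) @ take n (drop (2*n) y) @ drop (3*n) y"
proof -
  have a: "drop n y = take n (drop n y) @ drop (2*n) y"
    by (metis append_take_drop_id drop_drop mult_2 add.commute)
  have b: "drop (2*n) y = take n (drop (2*n) y) @ drop (3*n) y"
  proof -
    have "drop n (drop (2*n) y) = drop (3*n) y" by (simp add: drop_drop)
    then show ?thesis by (metis append_take_drop_id)
  qed
  show ?thesis using a b by (metis append_take_drop_id)
qed

lemma pw_a: "fs (zu_mult (y4 - y2, y2) (At B k j)) + (snd (B j k) * y2 + (fst (B j k) + snd (B j k)) * y4) = 0"
  by (rule eq4[where W="snd (B j k) * y4"]) (simp add: fs_def At_fst At_snd algebra_simps)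

lemma pw_b: "snd (zu_mult (y4 - y2, y2) (At B k j)) + fs (zu_mult (y4 - y2, y2) (At B k j)) + fst (B j k) * (y2 + y4) = 0"
  by (rule eq4[where W="snd (B j k) * y4"]) (simp add: fs_def At_fst At_snd algebra_simps)

lemma dual_gray: "dual_z4 (4*n) (gray ` CA n B) = {GD n (At B) z | z. length z = n}"
proof
  show "dual_z4 (4*n) (gray ` CA n B) \<subseteq> {GD n (At B) z | z. length z = n}"
  proof
    fix y assume y: "y \<in> dual_z4 (4*n) (gray ` CA n B)"
    have ly: "length y = 4*n" using y by (simp add: dual_z4_def)
    define y1 where "y1 = take n y"
    define y2 where "y2 = take n (drop n y)"
    define y3 where "y3 = take n (drop (2*n) y)"
    define y4 where "y4 = drop (3*n) y"
    have yy: "y = y1@y2@y3@y4" unfolding y1_def y2_def y3_def y4_def by (rule split4)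
    have l: "length y1 = n" "length y2 = n" "length y3 = n" "length y4 = n"
      using ly by (auto simp: y1_def y2_def y3_def y4_def)
    have orth: "z4_inner (gray (x @ vm n x B)) y = 0" if "length x = n" for x
      using y that by (auto simp: dual_z4_def CA_def)
    have EF: "Ef n B y1 y2 y3 y4 j = 0 \<and> Ff n B y1 y2 y3 y4 j = 0" if j: "j < n" for j
    proof -
      have unit: "(\<Sum>i<n. fst (x!i) * Ef n B y1 y2 y3 y4 i + snd (x!i) * Ff n B y1 y2 y3 y4 i)
          = fst u * Ef n B y1 y2 y3 y4 j + snd u * Ff n B y1 y2 y3 y4 j"
        if x: "x = map (\<lambda>i. if i = j then u else 0) [0..<n]" for x u
      proof -
        have "(\<Sum>i<n. fst (x!i) * Ef n B y1 y2 y3 y4 i + snd (x!i) * Ff n B y1 y2 y3 y4 i)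
          = (\<Sum>i<n. if i = j then fst u * Ef n B y1 y2 y3 y4 i + snd u * Ff n B y1 y2 y3 y4 i else 0)"
          by (rule sum.cong) (auto simp: x)
        then show ?thesis using j by (simp add: sum.delta')
      qed
      have "0 = z4_inner (gray (map (\<lambda>i. if i = j then (1,0) else 0) [0..<n] @ vm n (map (\<lambda>i. if i = j then (1,0) else 0) [0..<n]) B)) y"
        using orth by simp
      also have "\<dots> = Ef n B y1 y2 y3 y4 j"
        using inner_gray[of "map (\<lambda>i. if i = j then (1,0) else 0) [0..<n]" n y1 y2 y3 y4 B] l yy unit[OF refl, of "(1,0)"]
        by simp
      finally have 1: "Ef n B y1 y2 y3 y4 j = 0" ..
      have "0 = z4_inner (gray (map (\<lambda>i. if i = j then (0,1) else 0) [0..<n] @ vm n (map (\<lambda>i. if i = j then (0,1) else 0) [0..<n]) B)) y"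
        using orth by simp
      also have "\<dots> = Ff n B y1 y2 y3 y4 j"
        using inner_gray[of "map (\<lambda>i. if i = j then (0,1) else 0) [0..<n]" n y1 y2 y3 y4 B] l yy unit[OF refl, of "(0,1)"]
        by simp
      finally have 2: "Ff n B y1 y2 y3 y4 j = 0" ..
      show ?thesis using 1 2 by simp
    qed
    define z where "z = map (\<lambda>k. (y4!k - y2!k, y2!k)) [0..<n]"
    have lz: "length z = n" by (simp add: z_def)
    have e2: "y2 = map snd z" by (rule nth_equalityI) (auto simp: z_def l)
    have e4: "y4 = map fs z" by (rule nth_equalityI) (auto simp: z_def l fs_def)
    have S: "(\<Sum>k<n. fs (zu_mult (z!k) (At B k j))) = y3!j" if j: "j < n" for j
    proof -
      have h1: "(\<Sum>k<n. fs (zu_mult (z!k) (At B k j))) + (\<Sum>k<n. snd (B j k) * y2!k + (fst (B j k) + snd (B j k)) * y4!k) = 0"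
        unfolding sum.distrib[symmetric]
      proof (rule sum.neutral, rule ballI)
        fix k assume "k \<in> {..<n}"
        then have zk: "z!k = (y4!k - y2!k, y2!k)" by (simp add: z_def)
        show "fs (zu_mult (z!k) (At B k j)) + (snd (B j k) * y2!k + (fst (B j k) + snd (B j k)) * y4!k) = 0"
          unfolding zk by (rule pw_a)
      qed
      have h2: "y3!j + (\<Sum>k<n. snd (B j k) * y2!k + (fst (B j k) + snd (B j k)) * y4!k) = 0"
        using conjunct1[OF EF[OF j]] unfolding Ef_def .
      show ?thesis using add_right_imp_eq[OF trans[OF h1 sym[OF h2]]] .
    qed
    have e3: "y3 = map fs (vm n z (At B))"
      by (rule nth_equalityI) (auto simp: l nth_vm fs_sum S)
    have S1: "(\<Sum>k<n. snd (zu_mult (z!k) (At B k j))) = y1!j" if j: "j < n" for j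
    proof -
      have h1: "(\<Sum>k<n. snd (zu_mult (z!k) (At B k j))) + (\<Sum>k<n. fs (zu_mult (z!k) (At B k j))) + (\<Sum>k<n. fst (B j k) * (y2!k + y4!k)) = 0"
        unfolding sum.distrib[symmetric]
      proof (rule sum.neutral, rule ballI)
        fix k assume "k \<in> {..<n}"
        then have zk: "z!k = (y4!k - y2!k, y2!k)" by (simp add: z_def)
        show "snd (zu_mult (z!k) (At B k j)) + fs (zu_mult (z!k) (At B k j)) + fst (B j k) * (y2!k + y4!k) = 0"
          unfolding zk by (rule pw_b)
      qed
      have h2: "y1!j + y3!j + (\<Sum>k<n. fst (B j k) * (y2!k + y4!k)) = 0"
        using conjunct2[OF EF[OF j]] unfolding Ff_def .
      have h3: "(\<Sum>k<n. snd (zu_mult (z!k) (At B k j))) + y3!j + (\<Sum>k<n. fst (B j k) * (y2!k + y4!k)) = 0"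
        using h1 unfolding S[OF j] .
      show ?thesis using add_right_imp_eq[OF add_right_imp_eq[OF trans[OF h3 sym[OF h2]]]] .
    qed
    have e1: "y1 = map snd (vm n z (At B))"
      by (rule nth_equalityI) (auto simp: l nth_vm snd_sum S1 simp del: zm_simps)
    have "y = GD n (At B) z" unfolding GD_def yy e1 e2 e3 e4 ..
    then show "y \<in> {GD n (At B) z | z. length z = n}" using lz by blast
  qed
  show "{GD n (At B) z | z. length z = n} \<subseteq> dual_z4 (4*n) (gray ` CA n B)"
  proof
    fix y assume "y \<in> {GD n (At B) z | z. length z = n}"
    then obtain z where z: "y = GD n (At B) z" "length z = n" by blast
    have "z4_inner c y = 0" if c: "c \<in> gray ` CA n B" for c
    proof -
      obtain x where x: "c = gray (x @ vm n x B)" "length x = n" using c by (auto simp: CA_def)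
      have "z4_inner c y = (\<Sum>j<n. fst (x!j) * Ef n B (map snd (vm n z (At B))) (map snd z) (map fs (vm n z (At B))) (map fs z) j
         + snd (x!j) * Ff n B (map snd (vm n z (At B))) (map snd z) (map fs (vm n z (At B))) (map fs z) j)"
        unfolding x z GD_def by (rule inner_gray) (simp_all add: x z)
      also have "\<dots> = 0" by (rule sum.neutral) (simp add: GD_EF z)
      finally show ?thesis .
    qed
    moreover have "length y = 4*n" using z by (simp add: GD_def)
    ultimately show "y \<in> dual_z4 (4*n) (gray ` CA n B)" by (simp add: dual_z4_def)
  qed
qed



lemma sl_lee_zu: "sum_list (map lee_zu v) = (\<Sum>x\<leftarrow>v. lee_z4 (snd x)) + (\<Sum>x\<leftarrow>v. lee_z4 (fst x + snd x))"
  by (induction v) (auto simp: lee_zu_def)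

lemma lee_gray: "lee_wt_z4 (gray v) = lee_wt_zu v"
  by (simp add: lee_wt_z4_def lee_wt_zu_def sl_lee_zu gray_def comp_def)

lemma gray_inj: "inj gray"
proof (rule injI)
  fix v w assume h: "gray v = gray w"
  have lg: "\<And>u. length (gray u) = 2 * length u" by (simp add: gray_def)
  have "length v = length w" using arg_cong[OF h, of length] lg by simp
  then have a: "map snd v = map snd w" and b: "map (\<lambda>x. fst x + snd x) v = map (\<lambda>x. fst x + snd x) w"
    using h by (auto simp: gray_def)
  show "v = w"
  proof (rule nth_equalityI)
    show "length v = length w" by fact
    fix i assume i: "i < length v"
    have 1: "snd (v!i) = snd (w!i)" using arg_cong[OF a, of "\<lambda>l. l!i"] i \<open>length v = length w\<close> by simp
    have 2: "fst (v!i) + snd (v!i) = fst (w!i) + snd (w!i)" using arg_cong[OF b, of "\<lambda>l. l!i"] i \<open>length v = length w\<close> by simp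
    show "v!i = w!i" using 1 2 by (simp add: prod_eq_iff)
  qed
qed

lemma lee_z4_app: "lee_wt_z4 (a @ b) = lee_wt_z4 a + lee_wt_z4 b" by (simp add: lee_wt_z4_def)

lemma lee_GD: "lee_wt_z4 (GD n A z) = lee_wt_zu (z @ vm n z A)"
  by (simp add: GD_def lee_wt_z4_def lee_wt_zu_def sl_lee_zu fs_def comp_def)

lemma GD_wteq: "wteq lee_wt_zu (CA n A) lee_wt_z4 {GD n A z | z. length z = n}"
proof (rule wteq_bij[where h="\<lambda>v. GD n A (take n v)"])
  have inj: "inj_on (\<lambda>v. GD n A (take n v)) (CA n A)"
  proof (rule inj_onI)
    fix v w assume v: "v \<in> CA n A" and w: "w \<in> CA n A" and h: "GD n A (take n v) = GD n A (take n w)"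
    obtain x where x: "v = x @ vm n x A" "length x = n" using v by (auto simp: CA_def)
    obtain y where y: "w = y @ vm n y A" "length y = n" using w by (auto simp: CA_def)
    have a: "map snd x = map snd y" and b: "map fs x = map fs y" using h x y by (simp_all add: GD_def)
    have "x = y"
    proof (rule nth_equalityI)
      show "length x = length y" using x y by simp
      fix i assume i: "i < length x"
      have 1: "snd (x!i) = snd (y!i)" using arg_cong[OF a, of "\<lambda>l. l!i"] i x y by simp
      have 2: "fs (x!i) = fs (y!i)" using arg_cong[OF b, of "\<lambda>l. l!i"] i x y by simp
      show "x!i = y!i" using 1 2 by (simp add: prod_eq_iff fs_def)
    qed
    then show "v = w" using x y by simp
  qed
  have img: "(\<lambda>v. GD n A (take n v)) ` CA n A = {GD n A z | z. length z = n}"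
  proof
    show "(\<lambda>v. GD n A (take n v)) ` CA n A \<subseteq> {GD n A z | z. length z = n}"
      unfolding CA_def by auto
    show "{GD n A z | z. length z = n} \<subseteq> (\<lambda>v. GD n A (take n v)) ` CA n A"
    proof
      fix y assume "y \<in> {GD n A z | z. length z = n}"
      then obtain z where z: "y = GD n A z" "length z = n" by blast
      then have "z @ vm n z A \<in> CA n A" by (auto simp: CA_def)
      moreover have "y = GD n A (take n (z @ vm n z A))" using z by simp
      ultimately show "y \<in> (\<lambda>v. GD n A (take n v)) ` CA n A" by blast
    qed
  qed
  show "bij_betw (\<lambda>v. GD n A (take n v)) (CA n A) {GD n A z | z. length z = n}"
    using inj_on_imp_bij_betw[OF inj] img by simp
  show "lee_wt_z4 (GD n A (take n x)) = lee_wt_zu x" if x: "x \<in> CA n A" for x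
  proof -
    obtain z where z: "x = z @ vm n z A" "length z = n" using x by (auto simp: CA_def)
    then have "take n x = z" by simp
    then show ?thesis using z(1) lee_GD[of n A z] by simp
  qed
qed



lemma gt_add: "gt (x + y) = gt x + gt y"
  by (simp add: gt_def prod_eq_iff algebra_simps)
lemma gt_mul: "gt (zu_mult x y) = zu_mult (gt x) (gt y)"
proof -
  have "fst (gt (zu_mult x y)) = fst (zu_mult (gt x) (gt y))"
    by (rule eq4[where W="- (snd x * snd y)"]) (simp add: gt_def algebra_simps)
  moreover have "snd (gt (zu_mult x y)) = snd (zu_mult (gt x) (gt y))"
    by (rule eq4[where W="snd x * snd y"]) (simp add: gt_def algebra_simps)
  ultimately show ?thesis by (simp add: prod_eq_iff)
qed
lemma gt_inv: "gt (gt x) = x"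
  by (simp add: gt_def prod_eq_iff algebra_simps)
lemma gt_lee: "lee_zu (gt x) = lee_zu x"
proof -
  have "fst (gt x) + snd (gt x) = fst x + snd x"
    by (rule eq4[where W="- snd x"]) (simp add: gt_def algebra_simps)
  moreover have "snd (gt x) = - snd x" by (simp add: gt_def)
  ultimately show ?thesis unfolding lee_zu_def by (simp add: add.commute)
qed
lemma gt_neg: "gt (- x) = - gt x"
  by (simp add: gt_def prod_eq_iff algebra_simps)

lemma gray_vadd: "length v = length w \<Longrightarrow> gray (vadd v w) = vadd (gray v) (gray w)"
proof -
  assume l: "length v = length w"
  have 1: "map snd (map2 (+) v w) = map2 (+) (map snd v) (map snd w)"
    using l by (induction v w rule: list_induct2) auto
  have 2: "map (\<lambda>x. fst x + snd x) (map2 (+) v w) = map2 (+) (map (\<lambda>x. fst x + snd x) v) (map (\<lambda>x. fst x + snd x) w)"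
    using l by (induction v w rule: list_induct2) (auto simp: algebra_simps)
  show ?thesis using l 1 2 by (simp add: gray_def vadd_def)
qed

lemma gray_smult: "z4_smult r (gray v) = gray (zu_smult (r, 0) v)"
  by (simp add: gray_def z4_smult_def zu_smult_def comp_def algebra_simps)

lemma gray_rep: "gray (replicate m 0) = replicate (2*m) 0"
  by (simp add: gray_def mult_2 replicate_add)

lemma linear_gray: "linear_code_z4 (4*n) (gray ` CA n B)"
proof -
  have L: "linear_code_zu (2*n) (CA n B)" by (rule linear_CA)
  show ?thesis unfolding linear_code_z4_def
  proof (intro conjI ballI allI)
    show "gray ` CA n B \<subseteq> {v. length v = 4 * n}" by (auto simp: CA_def gray_def)
    have "replicate (2*n) 0 \<in> CA n B" using L by (simp add: linear_code_zu_def)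
    then have "gray (replicate (2*n) 0) \<in> gray ` CA n B" by blast
    then show "replicate (4 * n) 0 \<in> gray ` CA n B" by (simp add: gray_rep)
  next
    fix x y assume "x \<in> gray ` CA n B" "y \<in> gray ` CA n B"
    then obtain v w where v: "v \<in> CA n B" "x = gray v" and w: "w \<in> CA n B" "y = gray w" by blast
    have "length v = length w" using v w by (auto simp: CA_def)
    moreover have "vadd v w \<in> CA n B" using L v w by (simp add: linear_code_zu_def)
    ultimately show "vadd x y \<in> gray ` CA n B" using v w by (simp add: gray_vadd[symmetric])
  next
    fix r x assume "x \<in> gray ` CA n B"
    then obtain v where v: "v \<in> CA n B" "x = gray v" by blast
    have "zu_smult (r, 0) v \<in> CA n B" using L v by (simp add: linear_code_zu_def)
    then show "z4_smult r x \<in> gray ` CA n B" using v by (simp add: gray_smult)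
  qed
qed

theorem theorem5p4:
  fixes n :: nat and M :: "nat \<Rightarrow> nat \<Rightarrow> zu4" and \<alpha> \<beta> \<gamma> :: zu4
  assumes "n \<ge> 2"
    and "circulant (n - 1) M"
    and "\<gamma> = \<beta> \<or> \<gamma> = - \<beta>"
  shows "formally_self_dual_zu (2 * n) (code_gen n (2 * n) (gen_matrix n (bordered \<alpha> \<beta> \<gamma> M)))
       \<and> formally_self_dual_z4 (4 * n)
           (gray ` code_gen n (2 * n) (gen_matrix n (bordered \<alpha> \<beta> \<gamma> M)))"
proof -
  let ?B = "bordered \<alpha> \<beta> \<gamma> M"
  have C: "code_gen n (2 * n) (gen_matrix n ?B) = CA n ?B" by (rule code_gen_CA)
  interpret T1: tmloc n "sig n" "ee \<beta> \<gamma>" False id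
    by unfold_locales (simp_all add: sig_props ee_sig)
  interpret T2: tmloc n "sig n" "ee \<beta> \<gamma>" True gt
    by unfold_locales (simp_all add: sig_props ee_sig gt_add gt_mul gt_inv gt_lee)
  have R1: "T1.Rel (tr ?B) ?B"
    unfolding T1.Rel_def using transpose_rel[OF assms] by blast
  have R2: "T2.Rel (At ?B) ?B"
    unfolding T2.Rel_def
  proof (intro allI impI)
    fix i j assume ij: "i < n" "j < n"
    have "At ?B i j = - gt (tr ?B i j)" by (simp add: At_def tr_def)
    also have "\<dots> = - gt (sg (ee \<beta> \<gamma> i) (sg (False \<noteq> ee \<beta> \<gamma> j) (id (?B (sig n i) (sig n j)))))"
      using transpose_rel[OF assms ij] by simp
    also have "\<dots> = sg (ee \<beta> \<gamma> i) (sg (True \<noteq> ee \<beta> \<gamma> j) (gt (?B (sig n i) (sig n j))))"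
      by (simp add: sg_def gt_neg)
    finally show "At ?B i j = sg (ee \<beta> \<gamma> i) (sg (True \<noteq> ee \<beta> \<gamma> j) (gt (?B (sig n i) (sig n j))))" .
  qed
  have zu: "formally_self_dual_zu (2 * n) (CA n ?B)"
    unfolding formally_self_dual_zu_def
  proof
    show "linear_code_zu (2 * n) (CA n ?B)" by (rule linear_CA)
    have "wteq lee_wt_zu (CA n ?B) lee_wt_zu (DZ n ?B)"
      using T1.Tm_wteq[OF R1] wteq_sym[OF DZ_wteq] by (rule wteq_trans)
    then show "same_weight_enum lee_wt_zu (CA n ?B) (dual_zu (2 * n) (CA n ?B))"
      by (simp add: same_weight_enum_def wteq_def dual_CA)
  qed
  have z4: "formally_self_dual_z4 (4 * n) (gray ` CA n ?B)"
    unfolding formally_self_dual_z4_def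
  proof
    show "linear_code_z4 (4 * n) (gray ` CA n ?B)" by (rule linear_gray)
    have g: "wteq lee_wt_z4 (gray ` CA n ?B) lee_wt_zu (CA n ?B)"
      by (rule wteq_sym, rule wteq_bij[where h=gray]) (auto simp: lee_gray intro: inj_on_imp_bij_betw inj_on_subset[OF gray_inj])
    have "wteq lee_wt_z4 (gray ` CA n ?B) lee_wt_z4 {GD n (At ?B) z | z. length z = n}"
      using wteq_trans[OF g wteq_trans[OF T2.Tm_wteq[OF R2] GD_wteq]] .
    then show "same_weight_enum lee_wt_z4 (gray ` CA n ?B) (dual_z4 (4 * n) (gray ` CA n ?B))"
      by (simp add: same_weight_enum_def wteq_def dual_gray)
  qed
  show ?thesis using zu z4 C by simp
qed


end
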